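(* Let $F$ be a field of characteristic $p > 0$. If $\phi \in F(z)$ is a rational function with no finite critical point, then there exist polynomials $f_1, f_2, g_1, g_2 \in F[z]$ such that \[ \phi(z) = \frac{f_1(z^p) + z f_2(z^p)}{g_1(z^p) + z g_2(z^p)}, \] and $f_2 g_1 - f_1 g_2$ is a nonzero constant function.
   Context: Finite critical points are taken over an algebraic closure $\overline{F}$: a point $x \in \overline F$ is a finite critical point of $\phi$ if, for a fractional linear transformation $\sigma$ over $\overline F$ with $\sigma(\phi(x)) \neq \infty$, $\frac{d(\sigma\circ\phi)}{dz}(x) = 0$. *)

theory Defs
  imports "HOL-Algebra.Algebraic_Closure_Type" "HOL-Computational_Algebra.Normalized_Fraction"
begin

text \<open>A point x of the algebraic closure is a finite critical
  point if for some fractional linear transformation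
  \<sigma>(w) = (\<alpha> w + \<beta>)/(\<gamma> w + \<delta>), \<alpha>\<delta> - \<beta>\<gamma> \<noteq> 0, over the algebraic closure,
  \<sigma>\<circ>\<phi> = N/D with N = \<alpha> a + \<beta> b, D = \<gamma> a + \<delta> b (again in lowest terms) is finite
  at x (D(x) \<noteq> 0) and its derivative (N'D - N D')/D^2 vanishes at x.\<close>

definition finite_critical_point :: "'a::field poly fract \<Rightarrow> 'a alg_closure \<Rightarrow> bool" where
  "finite_critical_point \<phi> x \<longleftrightarrow>
     (\<exists>a0 b0 :: 'a poly. b0 \<noteq> 0 \<and> coprime a0 b0 \<and> \<phi> = Fract a0 b0 \<and>
       (let a = map_poly to_ac a0; b = map_poly to_ac b0
        in \<exists>\<alpha> \<beta> \<gamma> \<delta> :: 'a alg_closure. \<alpha> * \<delta> - \<beta> * \<gamma> \<noteq> 0 \<and>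
             (let N = smult \<alpha> a + smult \<beta> b; D = smult \<gamma> a + smult \<delta> b
              in poly D x \<noteq> 0 \<and> poly (pderiv N * D - N * pderiv D) x = 0)))"

end

theory Submission
  imports Defs
begin

lemma map_ac_add: "map_poly to_ac (p + q) = map_poly to_ac p + map_poly to_ac q"
  by (intro poly_eqI) (simp add: coeff_map_poly)
lemma map_ac_diff: "map_poly to_ac (p - q) = map_poly to_ac p - map_poly to_ac q"
  by (intro poly_eqI) (simp add: coeff_map_poly)
lemma map_ac_mult: "map_poly to_ac (p * q) = map_poly to_ac p * map_poly to_ac q"
  by (intro poly_eqI) (simp add: coeff_map_poly coeff_mult to_ac_sum)
lemma map_ac_pderiv: "map_poly to_ac (pderiv p) = pderiv (map_poly to_ac p)"
  by (intro poly_eqI) (simp add: coeff_map_poly coeff_pderiv)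

lemma pderiv_deg_less: "pderiv (q::'a::field poly) \<noteq> 0 \<Longrightarrow> degree (pderiv q) < degree q"
proof -
  assume h: "pderiv q \<noteq> 0"
  have "degree q > 0"
  proof (rule ccontr)
    assume "\<not> degree q > 0"
    then have "q = [:coeff q 0:]" using degree_0_id[of q] by simp
    then have "pderiv q = 0" by (metis pderiv_pCons pderiv_0 add_0 pCons_0_0)
    with h show False by simp
  qed
  moreover have "degree (pderiv q) \<le> degree q - 1"
    by (rule degree_le) (auto simp: coeff_pderiv coeff_eq_0)
  ultimately show ?thesis by linarith
qed

lemma pcompose_Xpow: "pcompose ([:0,1:]^j) q = (q::'a::comm_ring_1 poly)^j"
  by (induction j) (simp_all add: pcompose_mult pcompose_pCons pcompose_1)
lemma pcompose_monom_monom: "pcompose (monom c j) (monom 1 P) = monom (c::'a::comm_ring_1) (j * P)"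
proof -
  have "pcompose (monom c j) (monom 1 P) = smult c (monom 1 P ^ j)"
    by (simp only: monom_altdef pcompose_smult pcompose_Xpow)
  also have "\<dots> = monom c (j * P)" by (simp add: monom_power smult_monom mult.commute)
  finally show ?thesis .
qed

lemma coeff_nz_mod:
  fixes a :: "'a::field poly"
  assumes "CHAR('a) > 0" "pderiv (pderiv a) = 0" "coeff a k \<noteq> 0" "\<not> CHAR('a) dvd k"
  shows "k mod CHAR('a) = 1"
proof -
  let ?P = "CHAR('a)"
  have pr: "prime ?P" using assms(1) by (rule prime_CHAR_semidom)
  then have P1: "?P > 1" by (rule prime_gt_1_nat)
  show ?thesis
  proof (cases "k \<ge> 2")
    case False
    then have "k = 0 \<or> k = 1" by auto
    then show ?thesis using assms(4) P1 by auto
  next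
    case True
    have "coeff (pderiv (pderiv a)) (k - 2) = of_nat (k-1) * (of_nat k * coeff a k)"
      using True by (simp add: coeff_pderiv Suc_diff_Suc numeral_2_eq_2)
    then have "of_nat (k-1) * of_nat k = (0::'a)" using assms(2,3) by simp
    then have "of_nat (k-1) = (0::'a) \<or> of_nat k = (0::'a)" by simp
    then have "?P dvd (k-1)" using assms(4) by (simp add: of_nat_eq_0_iff_char_dvd)
    then obtain m where "k - 1 = ?P * m" by blast
    then have "k = ?P * m + 1" using True by linarith
    moreover have "(?P * m + 1) mod ?P = 1 mod ?P" by (metis mod_mult_self4 mult.commute)
    ultimately show ?thesis using P1 by simp
  qed
qed

lemma decomp:
  fixes a :: "'a::field poly"
  assumes "CHAR('a) > 0" "pderiv (pderiv a) = 0"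
  shows "\<exists>f1 f2. a = pcompose f1 (monom 1 CHAR('a)) + [:0,1:] * pcompose f2 (monom 1 CHAR('a))"
proof -
  let ?P = "CHAR('a)"
  let ?m = "monom 1 ?P :: 'a poly"
  define f1 where "f1 = (\<Sum>k\<le>degree a. if ?P dvd k then monom (coeff a k) (k div ?P) else 0)"
  define f2 where "f2 = (\<Sum>k\<le>degree a. if ?P dvd k then 0 else monom (coeff a k) (k div ?P))"
  have e1: "pcompose f1 ?m = (\<Sum>k\<le>degree a. if ?P dvd k then monom (coeff a k) k else 0)"
    unfolding f1_def pcompose_sum
    by (intro sum.cong refl) (auto simp: pcompose_monom_monom)
  have e2: "[:0,1:] * pcompose f2 ?m = (\<Sum>k\<le>degree a. if ?P dvd k then 0 else monom (coeff a k) k)"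
    unfolding f2_def pcompose_sum sum_distrib_left
  proof (intro sum.cong refl)
    fix k assume "k \<in> {..degree a}"
    show "[:0,1:] * pcompose (if ?P dvd k then 0 else monom (coeff a k) (k div ?P)) ?m =
          (if ?P dvd k then 0 else monom (coeff a k) k)"
    proof (cases "?P dvd k")
      case False
      show ?thesis
      proof (cases "coeff a k = 0")
        case True then show ?thesis using False by simp
      next
        case nz: False
        have "k mod ?P = 1" using coeff_nz_mod[OF assms nz False] .
        then have "k = Suc (k div ?P * ?P)" by (metis add.commute div_mult_mod_eq plus_1_eq_Suc)
        then have "[:0,1:] * monom (coeff a k) (k div ?P * ?P) = monom (coeff a k) k"
        proof -
          define j where "j = k div ?P * ?P"
          assume "k = Suc (k div ?P * ?P)"
          then have kk: "k = Suc j" unfolding j_def .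
          show ?thesis unfolding j_def[symmetric] using monom_Suc[of "coeff a k" j] kk by simp
        qed
        then show ?thesis using False by (simp add: pcompose_monom_monom)
      qed
    qed simp
  qed
  have "pcompose f1 ?m + [:0,1:] * pcompose f2 ?m = (\<Sum>k\<le>degree a. monom (coeff a k) k)"
    unfolding e1 e2 sum.distrib[symmetric] by (intro sum.cong refl) auto
  also have "\<dots> = a" by (rule poly_as_sum_of_monoms)
  finally show ?thesis by metis
qed

lemma pderiv_pcompose_char: "pderiv (pcompose f (monom 1 CHAR('a))) = (0::'a::field poly)"
  by (simp add: pderiv_pcompose pderiv_monom)

lemma const_pcompose:
  assumes "pcompose h (monom 1 P) = [:c:]" "P > 0"
  shows "h = [:c::'a::field:]"
proof -
  have "degree h * P = 0" using degree_pcompose[of h "monom 1 P"] assms by (simp add: degree_monom_eq)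
  then have "degree h = 0" using assms(2) by simp
  then have "h = [:coeff h 0:]" using degree_0_id[of h] by simp
  then show ?thesis using assms(1) by (metis pcompose_const)
qed

lemma bez:
  fixes a b :: "'a::field poly"
  assumes cop: "coprime a b" and b: "b \<noteq> 0"
  shows "\<exists>u v. u * a + v * b = 1"
proof -
  let ?Q = "\<lambda>n. \<exists>u v. u * a + v * b \<noteq> 0 \<and> degree (u * a + v * b) = n"
  have "?Q (degree b)" by (rule exI[of _ 0], rule exI[of _ 1]) (simp add: b)
  then have "?Q (Least ?Q)" by (rule LeastI)
  then obtain u v where r: "u * a + v * b \<noteq> 0" "degree (u * a + v * b) = Least ?Q" by blast
  define r where "r = u * a + v * b"
  have minr: "degree r \<le> degree (u' * a + v' * b)" if "u' * a + v' * b \<noteq> 0" for u' v'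
    unfolding r_def r(2) by (rule Least_le) (use that in blast)
  have dv: "r dvd x" if x: "x = a \<or> x = b" for x
  proof (rule ccontr)
    assume nd: "\<not> r dvd x"
    then have m: "x mod r \<noteq> 0" by (simp add: mod_eq_0_iff_dvd)
    have "x mod r = x - x div r * r" by (simp add: minus_div_mult_eq_mod)
    also have "\<dots> = (if x = a then (1 - x div r * u) * a + (- (x div r * v)) * b
                      else (- (x div r * u)) * a + (1 - x div r * v) * b)"
      using x unfolding r_def by (auto simp: algebra_simps)
    finally have eq: "x mod r = (if x = a then (1 - x div r * u) * a + (- (x div r * v)) * b
                      else (- (x div r * u)) * a + (1 - x div r * v) * b)" .
    have "degree r \<le> degree (x mod r)"
    proof (cases "x = a")
      case True
      then show ?thesis using m eq minr[of "1 - x div r * u" "- (x div r * v)"] by simp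
    next
      case False
      then show ?thesis using m eq minr[of "- (x div r * u)" "1 - x div r * v"] by simp
    qed
    moreover have "degree (x mod r) < degree r" using m r(1) unfolding r_def
      by (intro degree_mod_less') auto
    ultimately show False by simp
  qed
  have "is_unit r" using coprime_common_divisor[OF cop dv[of a] dv[of b]] by simp
  then obtain k where k: "r = [:k:]" "k dvd 1" using is_unit_poly_iff by blast
  then have k0: "k \<noteq> 0" by auto
  have "smult (inverse k) u * a + smult (inverse k) v * b = smult (inverse k) r"
    unfolding r_def by (simp add: smult_add_right)
  also have "\<dots> = 1" using k k0 by simp
  finally show ?thesis by blast
qed

lemma coprime_rep:
  fixes \<phi> :: "'a::field poly fract"
  shows "\<exists>a b. b \<noteq> 0 \<and> coprime a b \<and> \<phi> = Fract a b"
proof -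
  let ?Q = "\<lambda>n. \<exists>a b. b \<noteq> 0 \<and> \<phi> = Fract a b \<and> degree b = n"
  obtain a0 b0 where "\<phi> = Fract a0 b0" "b0 \<noteq> 0" by (cases \<phi>) auto
  then have "?Q (degree b0)" by blast
  then have "?Q (Least ?Q)" by (rule LeastI)
  then obtain a b where ab: "b \<noteq> 0" "\<phi> = Fract a b" "degree b = Least ?Q" by blast
  have minb: "degree b \<le> degree b'" if "b' \<noteq> 0" "\<phi> = Fract a' b'" for a' b'
    unfolding ab(3) by (rule Least_le) (use that in blast)
  have "coprime a b"
  proof (rule coprimeI)
    fix c assume ca: "c dvd a" and cb: "c dvd b"
    obtain a' where a': "a = c * a'" using ca by blast
    obtain b' where b': "b = c * b'" using cb by blast
    have c0: "c \<noteq> 0" and b'0: "b' \<noteq> 0" using b' ab(1) by auto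
    have "Fract a b = Fract a' b'" using ab(1) b'0 by (simp add: eq_fract a' b')
    then have "degree b \<le> degree b'" using minb b'0 ab(2) by simp
    moreover have "degree b = degree c + degree b'" using b' c0 b'0 by (simp add: degree_mult_eq)
    ultimately have "degree c = 0" by simp
    then have "c = [:coeff c 0:]" using degree_0_id[of c] by simp
    moreover have "coeff c 0 \<noteq> 0"
    proof
      assume "coeff c 0 = 0"
      with \<open>c = [:coeff c 0:]\<close> have "c = 0" by simp
      with c0 show False by simp
    qed
    ultimately show "is_unit c" using is_unit_triv[of "coeff c 0"] by simp
  qed
  then show ?thesis using ab by blast
qed
theorem lemma3p1:
  fixes \<phi> :: "'a::field poly fract" and p :: nat
  assumes "CHAR('a) = p" and "p > 0"
    and "\<forall>x :: 'a alg_closure. \<not> finite_critical_point \<phi> x"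
  shows "\<exists>f1 f2 g1 g2 :: 'a poly.
           pcompose g1 (monom 1 p) + [:0, 1:] * pcompose g2 (monom 1 p) \<noteq> 0 \<and>
           \<phi> = Fract (pcompose f1 (monom 1 p) + [:0, 1:] * pcompose f2 (monom 1 p))
                      (pcompose g1 (monom 1 p) + [:0, 1:] * pcompose g2 (monom 1 p)) \<and>
           (\<exists>c. c \<noteq> 0 \<and> f2 * g1 - f1 * g2 = [:c:])"
proof -
  obtain a0 b0 where b0: "b0 \<noteq> 0" and cop: "coprime a0 b0" and phi: "\<phi> = Fract a0 b0"
    using coprime_rep[of \<phi>] by blast
  define W where "W = pderiv a0 * b0 - a0 * pderiv b0"
  let ?A = "map_poly to_ac a0" and ?B = "map_poly to_ac b0"
  have mW: "map_poly to_ac W = pderiv ?A * ?B - ?A * pderiv ?B"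
    by (simp add: W_def map_ac_diff map_ac_mult map_ac_pderiv)
  obtain u v where uv: "u * a0 + v * b0 = 1"
    using bez[OF cop b0] by blast
  have uv': "poly (map_poly to_ac u) x * poly ?A x + poly (map_poly to_ac v) x * poly ?B x = 1" for x
  proof -
    have "map_poly to_ac (u * a0 + v * b0) = 1" using uv by simp
    then have "poly (map_poly to_ac (u * a0 + v * b0)) x = 1" by simp
    then show ?thesis by (simp add: map_ac_add map_ac_mult)
  qed
  have crit: "finite_critical_point \<phi> x" if root: "poly (map_poly to_ac W) x = 0" for x
  proof (cases "poly ?B x = 0")
    case False
    have H: "poly (pderiv ?A * ?B - ?A * pderiv ?B) x = 0" using root mW by simp
    show ?thesis unfolding finite_critical_point_def Let_def
      apply (rule exI[of _ a0], rule exI[of _ b0])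
      apply (simp only: b0 cop phi simp_thms not_False_eq_True)
      apply (rule exI[of _ 1], rule exI[of _ 0], rule exI[of _ 0], rule exI[of _ 1])
      using False H by simp
  next
    case True
    then have A: "poly ?A x \<noteq> 0" using uv'[of x] by auto
    have "poly (pderiv ?B * ?A - ?B * pderiv ?A) x = 0"
      using root unfolding mW by (simp add: algebra_simps)
    note H = this
    show ?thesis unfolding finite_critical_point_def Let_def
      apply (rule exI[of _ a0], rule exI[of _ b0])
      apply (simp only: b0 cop phi simp_thms not_False_eq_True)
      apply (rule exI[of _ 0], rule exI[of _ 1], rule exI[of _ 1], rule exI[of _ 0])
      using A H by simp
  qed
  have Wc: "\<exists>c. c \<noteq> 0 \<and> W = [:c:]"
  proof (rule ccontr)
    assume nc: "\<not> ?thesis"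
    have "\<exists>x. poly (map_poly to_ac W) x = 0"
    proof (cases "degree W = 0")
      case True
      then have "W = [:coeff W 0:]" using degree_0_id[of W] by simp
      then have "W = 0" using nc by (cases "coeff W 0 = 0") auto
      then show ?thesis by simp
    next
      case False
      then have "degree (map_poly to_ac W) > 0" by (simp add: degree_map_poly)
      then show ?thesis by (rule alg_closed_imp_poly_has_root)
    qed
    then show False using crit assms(3) by blast
  qed
  then obtain c where c: "c \<noteq> 0" "W = [:c:]" by blast
  have a0nz: "a0 \<noteq> 0"
  proof
    assume "a0 = 0"
    then have "W = 0" unfolding W_def by simp
    with c show False by simp
  qed
  have "pderiv W = 0" using c by (simp add: pderiv_pCons)
  then have eq: "pderiv (pderiv a0) * b0 = a0 * pderiv (pderiv b0)"
    unfolding W_def by (simp add: pderiv_diff pderiv_mult algebra_simps)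
  have a2: "pderiv (pderiv a0) = 0"
  proof (rule ccontr)
    assume nz: "pderiv (pderiv a0) \<noteq> 0"
    have "a0 dvd pderiv (pderiv a0) * b0" using eq by simp
    have "pderiv (pderiv a0) = pderiv (pderiv a0) * (u * a0 + v * b0)" using uv by simp
    also have "\<dots> = (pderiv (pderiv a0) * u) * a0 + v * (pderiv (pderiv a0) * b0)"
      by (simp add: algebra_simps)
    finally have e: "pderiv (pderiv a0) = (pderiv (pderiv a0) * u) * a0 + v * (pderiv (pderiv a0) * b0)" .
    have "a0 dvd (pderiv (pderiv a0) * u) * a0" by simp
    moreover have "a0 dvd v * (pderiv (pderiv a0) * b0)"
      using \<open>a0 dvd pderiv (pderiv a0) * b0\<close> by (rule dvd_mult)
    ultimately have "a0 dvd (pderiv (pderiv a0) * u) * a0 + v * (pderiv (pderiv a0) * b0)"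
      by (rule dvd_add)
    then have "a0 dvd pderiv (pderiv a0)" using e by simp
    then have "degree a0 \<le> degree (pderiv (pderiv a0))" using nz by (rule dvd_imp_degree_le)
    moreover have n1: "pderiv a0 \<noteq> 0" using nz by auto
    ultimately show False using pderiv_deg_less[OF nz] pderiv_deg_less[OF n1] by linarith
  qed
  then have b2: "pderiv (pderiv b0) = 0" using eq a0nz by simp
  have P: "CHAR('a) > 0" using assms by simp
  obtain f1 f2 where fa: "a0 = pcompose f1 (monom 1 p) + [:0,1:] * pcompose f2 (monom 1 p)"
    using decomp[OF P a2] assms(1) by blast
  obtain g1 g2 where gb: "b0 = pcompose g1 (monom 1 p) + [:0,1:] * pcompose g2 (monom 1 p)"
    using decomp[OF P b2] assms(1) by blast
  let ?m = "monom 1 p :: 'a poly"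
  have d0: "pderiv (pcompose h ?m) = 0" for h using pderiv_pcompose_char[of h] assms(1) by simp
  have da: "pderiv a0 = pcompose f2 ?m" unfolding fa
    by (simp add: pderiv_add pderiv_mult d0 pderiv_pCons)
  have db: "pderiv b0 = pcompose g2 ?m" unfolding gb
    by (simp add: pderiv_add pderiv_mult d0 pderiv_pCons)
  have "W = pcompose f2 ?m * pcompose g1 ?m - pcompose f1 ?m * pcompose g2 ?m"
    unfolding W_def da db by (subst fa, subst gb) (simp add: algebra_simps)
  then have "pcompose (f2 * g1 - f1 * g2) ?m = [:c:]" using c by (simp add: pcompose_diff pcompose_mult)
  then have "f2 * g1 - f1 * g2 = [:c:]" using assms(2) by (rule const_pcompose)
  note hc = this
  have G: "pcompose g1 ?m + [:0,1:] * pcompose g2 ?m \<noteq> 0" using gb b0 by simp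
  have F: "\<phi> = Fract (pcompose f1 ?m + [:0,1:] * pcompose f2 ?m) (pcompose g1 ?m + [:0,1:] * pcompose g2 ?m)"
    using phi fa gb by simp
  show ?thesis
    apply (rule exI[of _ f1], rule exI[of _ f2], rule exI[of _ g1], rule exI[of _ g2])
    apply (intro conjI)
      apply (rule G)
     apply (rule F)
    apply (rule exI[of _ c])
    using c(1) hc by simp
qed

end
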